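(* Let $N\ge1$, $\sigma^2>0$, $P_S,P_R>0$, and for each $n=1,\dots,N$ let $\gamma_n^{sr}>0$, $\gamma_n^{rm}>0$, $\gamma_n^{re}>0$ with $\gamma_n^{rm}>\gamma_n^{re}$. Consider the problem $\mathcal{P}1$ in the variables $(P_n^s,P_n^r,t_n)_{n=1}^N$: maximize $\sum_{n=1}^N \frac12\log_2\!\Big(\frac{1+t_n}{1+P_n^r\gamma_n^{re}/\sigma^2}\Big)$ subject to $t_n\le P_n^s\gamma_n^{sr}/\sigma^2$ for all $n$; $t_n\le P_n^r\gamma_n^{rm}/\sigma^2$ for all $n$; $\sum_n P_n^s\le P_S$; $\sum_n P_n^r\le P_R$; $P_n^s\ge0$, $P_n^r\ge0$ for all $n$; and $P_n^r\gamma_n^{re}\le P_n^s\gamma_n^{sr}$ for all $n$. Then the maximum secure rate is achieved with the source and relay powers on each subcarrier satisfying $$P_n^s\gamma_n^{sr}=P_n^r\gamma_n^{rm},$$ i.e. $\mathcal{P}1$ has a global optimal solution in which this equality holds for every $n=1,\dots,N$.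
   Context: Problem $\mathcal{P}1$ is the power-allocation problem for sum secure rate maximization in an OFDMA downlink with a source, a half-duplex decode-and-forward relay, and mutually untrusted users, after each subcarrier $n$ has been assigned to the user with the best relay-to-user gain $\gamma_n^{rm}$; $\gamma_n^{re}$ is the largest relay-to-user gain among the other users (the equivalent eavesdropper), $\gamma_n^{sr}$ is the source-to-relay gain, $P_n^s,P_n^r$ are the source and relay powers on subcarrier $n$, and $t_n$ is an auxiliary variable representing $\min(P_n^s\gamma_n^{sr},P_n^r\gamma_n^{rm})/\sigma^2$. The secure rate on subcarrier $n$ is $\frac12\log_2\big((1+\min(P_n^s\gamma_n^{sr},P_n^r\gamma_n^{rm})/\sigma^2)/(1+P_n^r\gamma_n^{re}/\sigma^2)\big)$. *)

theory Defs
  imports "HOL-Analysis.Analysis"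
begin

text \<open>Subcarriers are indexed by n in {..<N} (i.e. 0,...,N-1).
  gsr, grm, gre : channel gains; sigma2 : noise power; PS, PR : power budgets.\<close>

definition P1_objective ::
  "nat \<Rightarrow> real \<Rightarrow> (nat \<Rightarrow> real) \<Rightarrow> (nat \<Rightarrow> real) \<Rightarrow> (nat \<Rightarrow> real) \<Rightarrow> real" where
  "P1_objective N sigma2 gre pr t =
     (\<Sum>n<N. (1/2) * log 2 ((1 + t n) / (1 + pr n * gre n / sigma2)))"

text \<open>Feasible set of problem P1. The condition 1 + t n > 0 is the natural domain
  of the logarithm in the objective (t n stands for a nonnegative SNR).\<close>
definition P1_feasible ::
  "nat \<Rightarrow> real \<Rightarrow> real \<Rightarrow> real \<Rightarrow> (nat \<Rightarrow> real) \<Rightarrow> (nat \<Rightarrow> real) \<Rightarrow> (nat \<Rightarrow> real)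
   \<Rightarrow> (nat \<Rightarrow> real) \<Rightarrow> (nat \<Rightarrow> real) \<Rightarrow> (nat \<Rightarrow> real) \<Rightarrow> bool" where
  "P1_feasible N sigma2 PS PR gsr grm gre ps pr t \<longleftrightarrow>
     (\<forall>n<N. 1 + t n > 0) \<and>
     (\<forall>n<N. t n \<le> ps n * gsr n / sigma2) \<and>
     (\<forall>n<N. t n \<le> pr n * grm n / sigma2) \<and>
     (\<Sum>n<N. ps n) \<le> PS \<and>
     (\<Sum>n<N. pr n) \<le> PR \<and>
     (\<forall>n<N. ps n \<ge> 0 \<and> pr n \<ge> 0) \<and>
     (\<forall>n<N. pr n * gre n \<le> ps n * gsr n)"

end

theory Submission imports Defs begin
lemma term_le:
  fixes s a b gsr grm gre t p pr :: real
  assumes "s>0" "gsr>0" "grm>0" "gre>0" "gre<grm" "1+t>0" "t \<le> p*gsr/s" "t \<le> pr*grm/s"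
    "p\<ge>0" "pr\<ge>0"
  shows "log 2 ((1+t)/(1+pr*gre/s)) \<le> log 2 ((1 + min p (pr*grm/gsr)*gsr/s)/(1+ min p (pr*grm/gsr)*gsr/grm*gre/s))"
proof -
  define m where "m = min p (pr*grm/gsr)"
  have m0: "m \<ge> 0" using assms by (simp add: m_def)
  have mg: "m*gsr \<le> p*gsr" "m*gsr \<le> pr*grm" using assms by (auto simp: m_def min_def field_simps)
  have "t \<le> m*gsr/s" using assms
    by (cases "p \<le> pr*grm/gsr") (simp_all add: m_def)
  hence t: "1+t \<le> 1 + m*gsr/s" by simp
  have "m*gsr/grm \<le> pr" using mg assms by (simp add: field_simps)
  hence "m*gsr/grm*gre \<le> pr*gre" by (rule mult_right_mono) (use assms in auto)
  hence "m*gsr/grm*gre/s \<le> pr*gre/s" by (rule divide_right_mono) (use assms in auto)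
  hence D: "1+ m*gsr/grm*gre/s \<le> 1+pr*gre/s" by simp
  have Dp: "1+ m*gsr/grm*gre/s > 0" using assms m0 by (simp add: add_pos_nonneg)
  have "(1+t)/(1+pr*gre/s) \<le> (1 + m*gsr/s)/(1+ m*gsr/grm*gre/s)"
    using t D Dp assms(6) by (intro frac_le) auto
  moreover have "(1+t)/(1+pr*gre/s) > 0" using assms(6) D Dp by simp
  ultimately show ?thesis unfolding m_def[symmetric] by simp
qed

definition KK :: "nat \<Rightarrow> real \<Rightarrow> real \<Rightarrow> real \<Rightarrow> (nat\<Rightarrow>real) \<Rightarrow> (nat\<Rightarrow>real) \<Rightarrow> (nat \<Rightarrow> real) set" where
 "KK N s PS PR gsr grm = Pi UNIV (\<lambda>i. if i < N then {0..PS} else {0}) \<inter> {p. (\<Sum>n<N. p n) \<le> PS}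
   \<inter> {p. (\<Sum>n<N. p n * (gsr n / grm n)) \<le> PR}"

lemma compact_KK: "compact (KK N s PS PR gsr grm)"
proof -
  have "compactin (product_topology (\<lambda>_. euclideanreal) UNIV) (PiE UNIV (\<lambda>i. if i < N then {0..PS} else {0::real}))"
    by (subst compactin_PiE) auto
  hence c: "compact (Pi UNIV (\<lambda>i. if i < N then {0..PS} else {0::real}))"
    by (simp add: euclidean_product_topology PiE_UNIV_domain)
  have c1: "closed {p::nat\<Rightarrow>real. (\<Sum>n<N. p n) \<le> PS}"
    by (intro closed_Collect_le continuous_on_sum continuous_on_const) (auto intro: continuous_on_product_coordinates)
  have c2: "closed {p::nat\<Rightarrow>real. (\<Sum>n<N. p n * (gsr n / grm n)) \<le> PR}"
    by (intro closed_Collect_le continuous_on_sum continuous_on_const continuous_intros) (auto intro: continuous_on_product_coordinates)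
  show ?thesis unfolding KK_def using c c1 c2 by (intro compact_Int_closed closed_Int)
qed
theorem theorem1:
  fixes N :: nat and sigma2 PS PR :: real
    and gsr grm gre :: "nat \<Rightarrow> real"
  assumes "N \<ge> 1" and "sigma2 > 0" and "PS > 0" and "PR > 0"
    and "\<And>n. n < N \<Longrightarrow> gsr n > 0"
    and "\<And>n. n < N \<Longrightarrow> grm n > 0"
    and "\<And>n. n < N \<Longrightarrow> gre n > 0"
    and "\<And>n. n < N \<Longrightarrow> grm n > gre n"
  shows "\<exists>ps pr t.
           P1_feasible N sigma2 PS PR gsr grm gre ps pr t \<and>
           (\<forall>ps' pr' t'. P1_feasible N sigma2 PS PR gsr grm gre ps' pr' t' \<longrightarrow>
              P1_objective N sigma2 gre pr' t' \<le> P1_objective N sigma2 gre pr t) \<and>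
           (\<forall>n<N. ps n * gsr n = pr n * grm n)"
proof -
  note A = assms
  define g where "g = (\<lambda>p::nat\<Rightarrow>real. P1_objective N sigma2 gre (\<lambda>n. p n * gsr n / grm n) (\<lambda>n. p n * gsr n / sigma2))"
  define K where "K = KK N sigma2 PS PR gsr grm"
  have Kc: "compact K" unfolding K_def by (rule compact_KK)
  have K0: "(\<lambda>_. 0) \<in> K" using A unfolding K_def KK_def by auto
  have gc: "continuous_on K g"
  proof -
    have pos: "0 < 1 + p n * gsr n / sigma2 \<and> 0 < 1 + p n * gsr n / grm n * gre n / sigma2"
      if "p \<in> K" "n < N" for p n
    proof -
      have "p n \<ge> 0" using that unfolding K_def KK_def by (auto simp: Pi_iff split: if_splits)
      moreover have "gsr n > 0" "grm n > 0" "gre n > 0" using A that by auto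
      ultimately show ?thesis using A(2) by (simp add: add_pos_nonneg)
    qed
    show ?thesis
      unfolding g_def P1_objective_def
      apply (intro continuous_intros)
      using A(2) A(6) by (auto intro: continuous_on_subset[OF continuous_on_product_coordinates] dest: pos) (metis less_irrefl)
  qed
  obtain p0 where p0K: "p0 \<in> K" and p0max: "\<And>q. q \<in> K \<Longrightarrow> g q \<le> g p0"
    using continuous_attains_sup[OF Kc _ gc] K0 by blast
  have p0nn: "\<And>n. n < N \<Longrightarrow> p0 n \<ge> 0" using p0K unfolding K_def KK_def by (auto simp: Pi_iff split: if_splits)
  define ps where "ps = p0"
  define pr where "pr = (\<lambda>n. p0 n * gsr n / grm n)"
  define t where "t = (\<lambda>n. p0 n * gsr n / sigma2)"
  have feas: "P1_feasible N sigma2 PS PR gsr grm gre ps pr t"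
    unfolding P1_feasible_def
  proof (intro conjI allI impI)
    fix n assume n: "n < N"
    have "p0 n \<ge> 0" using p0nn n .
    moreover have "gsr n > 0" "grm n > 0" "gre n > 0" "gre n < grm n" using A n by auto
    moreover have "gre n * p0 n \<le> grm n * p0 n" using calculation by (intro mult_right_mono) auto
    ultimately show "0 < 1 + t n" "t n \<le> ps n * gsr n / sigma2" "t n \<le> pr n * grm n / sigma2"
      "0 \<le> ps n" "0 \<le> pr n" "pr n * gre n \<le> ps n * gsr n"
      using A(2) by (auto simp: t_def ps_def pr_def field_simps intro!: add_pos_nonneg)
  next
    show "sum ps {..<N} \<le> PS" "sum pr {..<N} \<le> PR" using p0K unfolding K_def KK_def ps_def pr_def by auto
  qed
  have eq: "\<forall>n<N. ps n * gsr n = pr n * grm n" using A(6) by (auto simp: ps_def pr_def) (metis less_irrefl)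
  have opt: "P1_objective N sigma2 gre pr' t' \<le> P1_objective N sigma2 gre pr t"
    if F: "P1_feasible N sigma2 PS PR gsr grm gre ps' pr' t'" for ps' pr' t'
  proof -
    define q where "q = (\<lambda>n. if n < N then min (ps' n) (pr' n * grm n / gsr n) else 0)"
    have Fn: "\<And>n. n < N \<Longrightarrow> 1 + t' n > 0 \<and> t' n \<le> ps' n * gsr n / sigma2 \<and> t' n \<le> pr' n * grm n / sigma2
       \<and> ps' n \<ge> 0 \<and> pr' n \<ge> 0" using F unfolding P1_feasible_def by auto
    have sps: "sum ps' {..<N} \<le> PS" and spr: "sum pr' {..<N} \<le> PR" using F unfolding P1_feasible_def by auto
    have qle: "\<And>n. n < N \<Longrightarrow> q n \<le> ps' n" by (simp add: q_def)
    have qle2: "\<And>n. n < N \<Longrightarrow> q n * gsr n / grm n \<le> pr' n"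
    proof -
      fix n assume n: "n < N"
      have "q n \<le> pr' n * grm n / gsr n" using n by (simp add: q_def)
      thus "q n * gsr n / grm n \<le> pr' n" using A n by (simp add: field_simps)
    qed
    have qnn: "q n \<ge> 0" if n: "n < N" for n
    proof -
      have "gsr n > 0" "grm n > 0" using A n by auto
      thus ?thesis using Fn[OF n] n by (simp add: q_def)
    qed
    have s1: "(\<Sum>n<N. q n) \<le> PS" using sum_mono[of "{..<N}" q ps'] qle sps by force
    have s2: "(\<Sum>n<N. q n * (gsr n / grm n)) \<le> PR"
      using sum_mono[of "{..<N}" "\<lambda>n. q n * gsr n / grm n" pr'] qle2 spr by force
    have psle: "\<And>n. n < N \<Longrightarrow> ps' n \<le> PS"
    proof -
      fix n assume "n < N"
      hence "ps' n \<le> sum ps' {..<N}" using Fn by (intro member_le_sum) auto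
      thus "ps' n \<le> PS" using sps by linarith
    qed
    have "q \<in> K" unfolding K_def KK_def using s1 s2 qnn qle psle
      by (auto simp: Pi_iff intro: order_trans) (auto simp: q_def)
    hence "g q \<le> g p0" by (rule p0max)
    moreover have "P1_objective N sigma2 gre pr' t' \<le> g q"
      unfolding g_def P1_objective_def
    proof (intro sum_mono mult_left_mono)
      fix n assume "n \<in> {..<N}"
      hence n: "n < N" by simp
      show "log 2 ((1 + t' n) / (1 + pr' n * gre n / sigma2))
         \<le> log 2 ((1 + q n * gsr n / sigma2) / (1 + q n * gsr n / grm n * gre n / sigma2))"
        unfolding q_def using n term_le[where s=sigma2 and gsr="gsr n" and grm="grm n" and gre="gre n"
          and t="t' n" and p="ps' n" and pr="pr' n"] Fn[OF n] A(2) A(5-8)[OF n] by simp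
    qed simp
    moreover have "g p0 = P1_objective N sigma2 gre pr t" unfolding g_def pr_def t_def by simp
    ultimately show ?thesis by simp
  qed
  show ?thesis using feas eq opt by blast
qed

end
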